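(* Let $X$ be a Banach space and $x\in S_X$. (1) If $x$ is a preserved extreme point of $B_X$ and $x$ is a $\Delta$-point, then $x$ is a super $\Delta$-point. (2) If $x$ is an extreme point of $B_X$ and $x$ is a super $\Delta$-point, then $x$ is a ccs $\Delta$-point. (3) In particular, every preserved extreme point of $B_X$ which is a $\Delta$-point is both a super $\Delta$-point and a ccs $\Delta$-point.
   Context: $X$ is a real or complex Banach space with closed unit ball $B_X$, unit sphere $S_X$, and canonical embedding $J_X:X\to X^{**}$. A point $x\in B_X$ is a preserved extreme point if $J_X(x)$ is an extreme point of $B_{X^{**}}$. A slice of $B_X$ is a non-empty set $\{y\in B_X:\operatorname{Re}x^*(y)>\|x^*\|-\delta\}$ with $x^*\in X^*$, $\delta>0$; a ccs of $B_X$ is a set $\sum_{i=1}^n\lambda_iS_i$ with $\lambda_i\in(0,1]$, $\sum\lambda_i=1$, $S_i$ slices of $B_X$. For $x\in S_X$: $x$ is a $\Delta$-point if $\sup_{y\in S}\|x-y\|=2$ for every slice $S$ of $B_X$ containing $x$; a super $\Delta$-point if $\sup_{y\in V}\|x-y\|=2$ for every relatively weakly open subset $V$ of $B_X$ containing $x$; a ccs $\Delta$-point if $\sup_{y\in C}\|x-y\|=2$ for every ccs $C$ of $B_X$ containing $x$. *)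

theory Defs
  imports "HOL-Analysis.Analysis"
begin

(* X is a Banach space, viewed as a real Banach space.
   Its dual X* is the type 'a \<Rightarrow>\<^sub>L real, its bidual ('a \<Rightarrow>\<^sub>L real) \<Rightarrow>\<^sub>L real. *)

definition canon_embed :: "'a::banach \<Rightarrow> (('a \<Rightarrow>\<^sub>L real) \<Rightarrow>\<^sub>L real)" where
  "canon_embed x = Blinfun (\<lambda>f. blinfun_apply f x)"

definition preserved_extreme_point :: "'a::banach \<Rightarrow> bool" where
  "preserved_extreme_point x \<longleftrightarrow>
     x \<in> cball 0 1 \<and> canon_embed x extreme_point_of cball 0 1"

definition slice_of :: "('a::banach \<Rightarrow>\<^sub>L real) \<Rightarrow> real \<Rightarrow> 'a set" where
  "slice_of f \<delta> = {y \<in> cball 0 1. blinfun_apply f y > norm f - \<delta>}"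

definition is_slice :: "'a::banach set \<Rightarrow> bool" where
  "is_slice S \<longleftrightarrow> (\<exists>f \<delta>. \<delta> > 0 \<and> S = slice_of f \<delta>) \<and> S \<noteq> {}"

definition is_ccs :: "'a::banach set \<Rightarrow> bool" where
  "is_ccs C \<longleftrightarrow> (\<exists>n::nat. \<exists>lam :: nat \<Rightarrow> real. \<exists>S :: nat \<Rightarrow> 'a set.
      n \<ge> 1 \<and> (\<forall>i<n. 0 < lam i \<and> lam i \<le> 1 \<and> is_slice (S i)) \<and>
      (\<Sum>i<n. lam i) = 1 \<and>
      C = {(\<Sum>i<n. lam i *\<^sub>R y i) | y. \<forall>i<n. y i \<in> S i})"

definition weak_topology :: "'a::banach topology" where
  "weak_topology = topology_generated_by
     {{y. blinfun_apply f y \<in> U} | f U. open (U :: real set)}"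

definition rel_weakly_open_in_ball :: "'a::banach set \<Rightarrow> bool" where
  "rel_weakly_open_in_ball V \<longleftrightarrow> openin (subtopology weak_topology (cball 0 1)) V"

definition delta_point :: "'a::banach \<Rightarrow> bool" where
  "delta_point x \<longleftrightarrow> norm x = 1 \<and>
     (\<forall>S. is_slice S \<and> x \<in> S \<longrightarrow> (SUP y\<in>S. norm (x - y)) = 2)"

definition super_delta_point :: "'a::banach \<Rightarrow> bool" where
  "super_delta_point x \<longleftrightarrow> norm x = 1 \<and>
     (\<forall>V. rel_weakly_open_in_ball V \<and> x \<in> V \<longrightarrow> (SUP y\<in>V. norm (x - y)) = 2)"

definition ccs_delta_point :: "'a::banach \<Rightarrow> bool" where
  "ccs_delta_point x \<longleftrightarrow> norm x = 1 \<and>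
     (\<forall>C. is_ccs C \<and> x \<in> C \<longrightarrow> (SUP y\<in>C. norm (x - y)) = 2)"

end

theory Submission
  imports Defs
begin


definition lin_bd :: "(('a::banach \<Rightarrow>\<^sub>L real) \<Rightarrow> real) \<Rightarrow> bool" where
  "lin_bd h \<longleftrightarrow> (\<forall>f g. h (f + g) = h f + h g) \<and> (\<forall>c f. h (c *\<^sub>R f) = c * h f) \<and> (\<forall>f. \<bar>h f\<bar> \<le> norm f)"

lemma cont_eval: "continuous_on UNIV (\<lambda>h::'b \<Rightarrow> real. h f)"
  by (rule continuous_on_product_coordinates)

lemma compact_PiE_cball: "compact (PiE UNIV (\<lambda>f::'b. cball (0::real) (r f)))"
proof -
  have "compactin (product_topology (\<lambda>_. euclidean) UNIV) (PiE UNIV (\<lambda>f::'b. cball (0::real) (r f)))"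
    by (simp add: compactin_PiE)
  then show ?thesis by (simp add: euclidean_product_topology)
qed

lemma compact_Bs: "compact {h::('a::banach \<Rightarrow>\<^sub>L real) \<Rightarrow> real. lin_bd h}"
proof -
  have eq: "{h. lin_bd h} = PiE UNIV (\<lambda>f::'a\<Rightarrow>\<^sub>L real. cball (0::real) (norm f)) \<inter>
     ({h. \<forall>f g. h (f + g) = h f + h g} \<inter> {h. \<forall>c f. h (c *\<^sub>R f) = c * h f})"
    by (auto simp: lin_bd_def PiE_def extensional_def)
  have c1: "closed {h::('a\<Rightarrow>\<^sub>L real) \<Rightarrow> real. \<forall>f g. h (f + g) = h f + h g}"
    by (intro closed_Collect_all closed_Collect_eq continuous_intros cont_eval)
  have c2: "closed {h::('a\<Rightarrow>\<^sub>L real) \<Rightarrow> real. \<forall>c f. h (c *\<^sub>R f) = c * h f}"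
    by (intro closed_Collect_all closed_Collect_eq continuous_intros cont_eval)
  show ?thesis unfolding eq
    by (intro compact_Int_closed closed_Int c1 c2 compact_PiE_cball)
qed

definition cmb :: "real \<Rightarrow> ('b \<Rightarrow> real) \<Rightarrow> ('b \<Rightarrow> real) \<Rightarrow> ('b \<Rightarrow> real)" where
  "cmb t a b = (\<lambda>f. (1 - t) * a f + t * b f)"

definition fconvex :: "('b \<Rightarrow> real) set \<Rightarrow> bool" where
  "fconvex C \<longleftrightarrow> (\<forall>a\<in>C. \<forall>b\<in>C. \<forall>t. 0 \<le> t \<and> t \<le> 1 \<longrightarrow> cmb t a b \<in> C)"

definition conv2 :: "('b \<Rightarrow> real) set \<Rightarrow> ('b \<Rightarrow> real) set \<Rightarrow> ('b \<Rightarrow> real) set" where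
  "conv2 A B = A \<union> B \<union> {cmb t a b | t a b. t \<in> {0..1} \<and> a \<in> A \<and> b \<in> B}"

lemma cmb_0[simp]: "cmb 0 a b = a" and cmb_1[simp]: "cmb 1 a b = b"
  by (auto simp: cmb_def)

lemma lin_bd_cmb:
  assumes "lin_bd a" "lin_bd b" "0 \<le> t" "t \<le> 1"
  shows "lin_bd (cmb t a b)"
proof -
  have "\<bar>(1 - t) * a f + t * b f\<bar> \<le> norm f" for f
  proof -
    have "\<bar>(1 - t) * a f + t * b f\<bar> \<le> (1 - t) * \<bar>a f\<bar> + t * \<bar>b f\<bar>"
      using assms by (simp add: abs_triangle_ineq[THEN order_trans] abs_mult)
    also have "\<dots> \<le> (1 - t) * norm f + t * norm f"
      using assms unfolding lin_bd_def by (intro add_mono mult_left_mono) auto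
    finally show ?thesis by (simp add: algebra_simps)
  qed
  then show ?thesis using assms unfolding lin_bd_def cmb_def by (simp add: algebra_simps)
qed

lemma compact_cmb_image:
  assumes "compact A" "compact B"
  shows "compact {cmb t a b | t a b. t \<in> {0..1} \<and> a \<in> A \<and> b \<in> (B::('b \<Rightarrow> real) set)}"
proof -
  have eq: "{cmb t a b | t a b. t \<in> {0..1} \<and> a \<in> A \<and> b \<in> B} =
      (\<lambda>z. cmb (fst z) (fst (snd z)) (snd (snd z))) ` ({0..1::real} \<times> (A \<times> B))"
    by force
  have "continuous_on UNIV (\<lambda>z::real \<times> ('b \<Rightarrow> real) \<times> ('b \<Rightarrow> real). cmb (fst z) (fst (snd z)) (snd (snd z)))"
    unfolding cmb_def
  proof (intro continuous_on_coordinatewise_then_product)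
    fix f
    have e: "continuous_on UNIV (\<lambda>h::'b \<Rightarrow> real. h f)" by (rule cont_eval)
    have 1: "continuous_on UNIV (\<lambda>z::real \<times> ('b \<Rightarrow> real) \<times> ('b \<Rightarrow> real). fst (snd z) f)"
      by (rule continuous_on_compose2[OF e, where f="\<lambda>z. fst (snd z)"]) (auto intro!: continuous_on_fst continuous_on_snd continuous_on_id)
    have 2: "continuous_on UNIV (\<lambda>z::real \<times> ('b \<Rightarrow> real) \<times> ('b \<Rightarrow> real). snd (snd z) f)"
      by (rule continuous_on_compose2[OF e, where f="\<lambda>z. snd (snd z)"]) (auto intro!: continuous_on_fst continuous_on_snd continuous_on_id)
    show "continuous_on UNIV (\<lambda>z::real \<times> ('b \<Rightarrow> real) \<times> ('b \<Rightarrow> real). (1 - fst z) * fst (snd z) f + fst z * snd (snd z) f)"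
      by (intro continuous_intros 1 2)
  qed
  then show ?thesis unfolding eq
    by (intro compact_continuous_image compact_Times assms compact_Icc)
       (auto intro: continuous_on_subset)
qed


lemma cmb_in_fconvex: "fconvex C \<Longrightarrow> a \<in> C \<Longrightarrow> b \<in> C \<Longrightarrow> 0 \<le> t \<Longrightarrow> t \<le> 1 \<Longrightarrow> cmb t a b \<in> C"
  unfolding fconvex_def by blast

lemma aux_comb:
  fixes S q \<alpha> \<beta> u v :: real
  assumes "S * q = \<beta>" "S = \<alpha> + \<beta>"
  shows "S * ((1 - q) * u + q * v) = \<alpha> * u + \<beta> * v"
proof -
  have "S * ((1 - q) * u + q * v) = S * u - (S * q) * u + (S * q) * v" by (simp add: algebra_simps)
  also have "\<dots> = (\<alpha> + \<beta>) * u - \<beta> * u + \<beta> * v" using assms by simp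
  finally show ?thesis by (simp add: algebra_simps)
qed

lemma cmb_cmb_eq:
  fixes s t t' :: real
  assumes st: "0 \<le> s" "s \<le> 1" "0 \<le> t" "t \<le> 1" "0 \<le> t'" "t' \<le> 1"
  defines "\<alpha> \<equiv> (1 - s) * (1 - t)" and "\<beta> \<equiv> s * (1 - t')" and "\<gamma> \<equiv> (1 - s) * t" and "\<delta> \<equiv> s * t'"
  shows "cmb s (cmb t a b) (cmb t' a' b') =
     cmb (\<gamma> + \<delta>) (if \<alpha> + \<beta> = 0 then a else cmb (\<beta> / (\<alpha> + \<beta>)) a a')
                  (if \<gamma> + \<delta> = 0 then b else cmb (\<delta> / (\<gamma> + \<delta>)) b b')"
proof -
  have nn: "0 \<le> \<alpha>" "0 \<le> \<beta>" "0 \<le> \<gamma>" "0 \<le> \<delta>" using st unfolding \<alpha>_def \<beta>_def \<gamma>_def \<delta>_def by auto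
  have sum1: "\<alpha> + \<beta> + \<gamma> + \<delta> = 1" unfolding \<alpha>_def \<beta>_def \<gamma>_def \<delta>_def by (simp add: algebra_simps)
  have L: "cmb s (cmb t a b) (cmb t' a' b') f = \<alpha> * a f + \<beta> * a' f + \<gamma> * b f + \<delta> * b' f" for f
    unfolding cmb_def \<alpha>_def \<beta>_def \<gamma>_def \<delta>_def by (simp add: algebra_simps)
  show ?thesis
  proof (rule ext)
    fix f
    consider "\<alpha> + \<beta> = 0" | "\<gamma> + \<delta> = 0" | "\<alpha> + \<beta> \<noteq> 0" "\<gamma> + \<delta> \<noteq> 0" by blast
    then show "cmb s (cmb t a b) (cmb t' a' b') f = cmb (\<gamma> + \<delta>) (if \<alpha> + \<beta> = 0 then a else cmb (\<beta> / (\<alpha> + \<beta>)) a a')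
                  (if \<gamma> + \<delta> = 0 then b else cmb (\<delta> / (\<gamma> + \<delta>)) b b') f"
    proof cases
      case 1
      then have h: "\<alpha> = 0" "\<beta> = 0" "\<gamma> + \<delta> = 1" using nn sum1 by auto
      then have "\<delta> * b f + \<gamma> * b f = b f" "\<delta> * b' f + \<gamma> * b' f = b' f"
        by (metis add.commute distrib_right mult_1)+
      then show ?thesis unfolding L using h by (simp add: cmb_def field_simps)
    next
      case 2
      then have h: "\<gamma> = 0" "\<delta> = 0" "\<alpha> + \<beta> = 1" using nn sum1 by auto
      then have "\<alpha> * a f + \<beta> * a f = a f" "\<alpha> * a' f + \<beta> * a' f = a' f"
        by (metis distrib_right mult_1)+
      then show ?thesis unfolding L using h by (simp add: cmb_def field_simps)
    next
      case 3
      have e: "1 - (\<gamma> + \<delta>) = \<alpha> + \<beta>" using sum1 by simp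
      have x1: "(\<alpha> + \<beta>) * cmb (\<beta> / (\<alpha> + \<beta>)) a a' f = \<alpha> * a f + \<beta> * a' f"
        using 3(1) unfolding cmb_def by (intro aux_comb) auto
      have x2: "(\<gamma> + \<delta>) * cmb (\<delta> / (\<gamma> + \<delta>)) b b' f = \<gamma> * b f + \<delta> * b' f"
        using 3(2) unfolding cmb_def by (intro aux_comb) auto
      show ?thesis unfolding L using 3 x1 x2 by (simp add: cmb_def e)
    qed
  qed
qed

lemma fconvex_cmb_set:
  assumes "fconvex A" "fconvex B"
  shows "fconvex {cmb t a b | t a b. t \<in> {0..1} \<and> a \<in> A \<and> b \<in> B}"
  unfolding fconvex_def
proof (clarsimp)
  fix t a b t' a' b' s :: real
  fix t a b t' a' b' and s :: real
  assume h: "0 \<le> (t::real)" "t \<le> 1" "a \<in> A" "b \<in> B" "0 \<le> (t'::real)" "t' \<le> 1" "a' \<in> A" "b' \<in> B" "0 \<le> s" "s \<le> 1"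
  define \<alpha> where "\<alpha> \<equiv> (1 - s) * (1 - t)"
  define \<beta> where "\<beta> \<equiv> s * (1 - t')"
  define \<gamma> where "\<gamma> \<equiv> (1 - s) * t"
  define \<delta> where "\<delta> \<equiv> s * t'"
  have nn: "0 \<le> \<alpha>" "0 \<le> \<beta>" "0 \<le> \<gamma>" "0 \<le> \<delta>" using h unfolding \<alpha>_def \<beta>_def \<gamma>_def \<delta>_def by auto
  have sum1: "\<alpha> + \<beta> + \<gamma> + \<delta> = 1" unfolding \<alpha>_def \<beta>_def \<gamma>_def \<delta>_def by (simp add: algebra_simps)
  have A'': "(if \<alpha> + \<beta> = 0 then a else cmb (\<beta> / (\<alpha> + \<beta>)) a a') \<in> A"
    using h nn by (auto intro!: cmb_in_fconvex[OF assms(1)] simp: field_simps)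
  have B'': "(if \<gamma> + \<delta> = 0 then b else cmb (\<delta> / (\<gamma> + \<delta>)) b b') \<in> B"
    using h nn by (auto intro!: cmb_in_fconvex[OF assms(2)] simp: field_simps)
  have T: "0 \<le> \<gamma> + \<delta>" "\<gamma> + \<delta> \<le> 1" using nn sum1 by auto
  show "\<exists>ta aa. (\<exists>ba. cmb s (cmb t a b) (cmb t' a' b') = cmb ta aa ba \<and> 0 \<le> ta \<and> ta \<le> 1 \<and> aa \<in> A \<and> ba \<in> B)"
    using cmb_cmb_eq[OF h(9,10,1,2,5,6), of a b a' b'] A'' B'' T
    unfolding \<alpha>_def \<beta>_def \<gamma>_def \<delta>_def by blast
qed


definition pext :: "(('a::banach \<Rightarrow>\<^sub>L real) \<Rightarrow> real) \<Rightarrow> bool" where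
  "pext p \<longleftrightarrow> (\<forall>a b t. lin_bd a \<and> lin_bd b \<and> 0 < t \<and> t < 1 \<and> cmb t a b = p \<longrightarrow> a = p)"

lemma conv2_props:
  fixes A B :: "(('a::banach \<Rightarrow>\<^sub>L real) \<Rightarrow> real) set"
  assumes "compact A" "compact B" "fconvex A" "fconvex B" "A \<subseteq> {h. lin_bd h}" "B \<subseteq> {h. lin_bd h}"
    "p \<notin> A" "p \<notin> B" "pext p"
  shows "compact (conv2 A B) \<and> fconvex (conv2 A B) \<and> conv2 A B \<subseteq> {h. lin_bd h} \<and> p \<notin> conv2 A B"
proof -
  let ?M = "{cmb t a b | t a b. t \<in> {0..1} \<and> a \<in> A \<and> b \<in> B}"
  have cM: "compact ?M" by (rule compact_cmb_image[OF assms(1,2)])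
  have fM: "fconvex ?M" by (rule fconvex_cmb_set[OF assms(3,4)])
  have sM: "?M \<subseteq> {h. lin_bd h}" using assms(5,6) by (auto intro!: lin_bd_cmb)
  have pM: "p \<notin> ?M"
  proof
    assume "p \<in> ?M"
    then obtain t a b where h: "p = cmb t a b" "0 \<le> t" "t \<le> 1" "a \<in> A" "b \<in> B" by auto
    consider "t = 0" | "t = 1" | "0 < t" "t < 1" using h by linarith
    then show False
    proof cases
      case 1 then show False using h assms(7) by simp
    next
      case 2 then show False using h assms(8) by simp
    next
      case 3
      then have "a = p" using assms(9,5,6) h unfolding pext_def by blast
      then show False using h assms(7) by simp
    qed
  qed
  have conv2_eq: "conv2 A B = ?M" if nAB: "A \<noteq> {}" "B \<noteq> {}"
  proof -
    obtain a0 b0 where "a0 \<in> A" "b0 \<in> B" using nAB by blast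
    have "A \<subseteq> ?M"
    proof
      fix a assume "a \<in> A"
      then have "cmb 0 a b0 \<in> ?M" using \<open>b0 \<in> B\<close> by fastforce
      then show "a \<in> ?M" by simp
    qed
    moreover have "B \<subseteq> ?M"
    proof
      fix b assume "b \<in> B"
      then have "cmb 1 a0 b \<in> ?M" using \<open>a0 \<in> A\<close> by fastforce
      then show "b \<in> ?M" by simp
    qed
    ultimately show ?thesis unfolding conv2_def by blast
  qed
  show ?thesis
  proof (cases "A = {} \<or> B = {}")
    case True
    then have "conv2 A B = A \<or> conv2 A B = B" by (auto simp: conv2_def)
    moreover have "conv2 A B = A \<union> B" using True by (auto simp: conv2_def)
    ultimately show ?thesis using assms by auto
  next
    case False
    then show ?thesis using conv2_eq cM fM sM pM by auto
  qed
qed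

definition Kp :: "(('a::banach \<Rightarrow>\<^sub>L real) \<Rightarrow> real) \<Rightarrow> real \<Rightarrow> ('a \<Rightarrow>\<^sub>L real) \<Rightarrow> real \<Rightarrow> (('a \<Rightarrow>\<^sub>L real) \<Rightarrow> real) set" where
  "Kp p \<epsilon> f s = {h. lin_bd h \<and> \<epsilon> \<le> s * (h f - p f)}"

lemma Kp_props:
  assumes "\<epsilon> > 0"
  shows "compact (Kp p \<epsilon> f s) \<and> fconvex (Kp p \<epsilon> f s) \<and> Kp p \<epsilon> f s \<subseteq> {h. lin_bd h} \<and> p \<notin> Kp p \<epsilon> f s"
proof -
  have eq: "Kp p \<epsilon> f s = {h. lin_bd h} \<inter> {h. \<epsilon> \<le> s * (h f - p f)}" by (auto simp: Kp_def)
  have "closed {h::('a \<Rightarrow>\<^sub>L real) \<Rightarrow> real. \<epsilon> \<le> s * (h f - p f)}"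
    by (intro closed_Collect_le continuous_intros cont_eval)
  then have c: "compact (Kp p \<epsilon> f s)" unfolding eq by (intro compact_Int_closed compact_Bs)
  have fc: "fconvex (Kp p \<epsilon> f s)"
    unfolding fconvex_def
  proof (intro ballI allI impI)
    fix a b t assume h: "a \<in> Kp p \<epsilon> f s" "b \<in> Kp p \<epsilon> f s" "0 \<le> (t::real) \<and> t \<le> 1"
    have "s * (cmb t a b f - p f) = (1 - t) * (s * (a f - p f)) + t * (s * (b f - p f))"
      by (simp add: cmb_def algebra_simps)
    also have "\<dots> \<ge> (1 - t) * \<epsilon> + t * \<epsilon>"
      using h by (intro add_mono mult_left_mono) (auto simp: Kp_def)
    finally have "\<epsilon> \<le> s * (cmb t a b f - p f)" by (simp add: algebra_simps)
    then show "cmb t a b \<in> Kp p \<epsilon> f s" using h lin_bd_cmb by (auto simp: Kp_def)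
  qed
  show ?thesis using c fc assms by (auto simp: Kp_def)
qed

lemma pieces_hull:
  fixes P :: "(('a::banach \<Rightarrow>\<^sub>L real) \<times> real) set"
  assumes "finite P" "\<epsilon> > 0" "pext p"
  shows "\<exists>C. compact C \<and> fconvex C \<and> C \<subseteq> {h. lin_bd h} \<and> p \<notin> C \<and> (\<forall>(f, s)\<in>P. Kp p \<epsilon> f s \<subseteq> C)"
  using assms(1)
proof (induction P rule: finite_induct)
  case empty
  show ?case by (intro exI[of _ "{}"]) (auto simp: fconvex_def)
next
  case (insert fs P)
  obtain C where C: "compact C" "fconvex C" "C \<subseteq> {h. lin_bd h}" "p \<notin> C" "\<forall>(f, s)\<in>P. Kp p \<epsilon> f s \<subseteq> C"
    using insert.IH by blast
  obtain f s where fs: "fs = (f, s)" by fastforce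
  have K: "compact (Kp p \<epsilon> f s)" "fconvex (Kp p \<epsilon> f s)" "Kp p \<epsilon> f s \<subseteq> {h. lin_bd h}" "p \<notin> Kp p \<epsilon> f s"
    using Kp_props[OF assms(2)] by auto
  have "compact (conv2 C (Kp p \<epsilon> f s)) \<and> fconvex (conv2 C (Kp p \<epsilon> f s)) \<and> conv2 C (Kp p \<epsilon> f s) \<subseteq> {h. lin_bd h} \<and> p \<notin> conv2 C (Kp p \<epsilon> f s)"
    by (rule conv2_props[OF C(1) K(1) C(2) K(2) C(3) K(3) C(4) K(4) assms(3)])
  moreover have "C \<subseteq> conv2 C (Kp p \<epsilon> f s)" "Kp p \<epsilon> f s \<subseteq> conv2 C (Kp p \<epsilon> f s)" by (auto simp: conv2_def)
  ultimately show ?case using C(5) fs by (intro exI[of _ "conv2 C (Kp p \<epsilon> f s)"]) blast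
qed


lemma finite_cover:
  fixes C :: "('b \<Rightarrow> real) set"
  assumes "compact C" "p \<notin> C"
  shows "\<exists>G. finite G \<and> (\<forall>h\<in>C. \<exists>f\<in>G. h f \<noteq> p f)"
proof -
  have opn: "open {h::'b \<Rightarrow> real. h g \<noteq> p g}" for g
    by (intro open_Collect_neq cont_eval continuous_on_const)
  have "C \<subseteq> (\<Union>g\<in>UNIV. {h. h g \<noteq> p g})" 
  proof
    fix h assume "h \<in> C"
    then have "h \<noteq> p" using assms(2) by auto
    then obtain g where "h g \<noteq> p g" by auto
    then show "h \<in> (\<Union>g\<in>UNIV. {h. h g \<noteq> p g})" by auto
  qed
  then obtain G where "G \<subseteq> UNIV" "finite G" "C \<subseteq> (\<Union>g\<in>G. {h. h g \<noteq> p g})"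
    using compactE_image[OF assms(1), of UNIV "\<lambda>g. {h. h g \<noteq> p g}"] opn by blast
  then show ?thesis by blast
qed

lemma sep_lemma:
  fixes C :: "('b \<Rightarrow> real) set"
  assumes G: "finite G" and C: "compact C" "fconvex C" and dif: "\<forall>h\<in>C. \<exists>f\<in>G. h f \<noteq> p f"
  shows "\<exists>c \<eta>. \<eta> > 0 \<and> (\<forall>h\<in>C. (\<Sum>f\<in>G. c f * h f) + \<eta> \<le> (\<Sum>f\<in>G. c f * p f))"
proof (cases "C = {}")
  case True then show ?thesis by (intro exI[of _ "\<lambda>_. 0"] exI[of _ 1]) auto
next
  case False
  define Q where "Q h = (\<Sum>f\<in>G. (h f - p f)^2)" for h :: "'b \<Rightarrow> real"
  have "continuous_on C Q" unfolding Q_def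
    by (intro continuous_intros continuous_on_subset[OF cont_eval]) auto
  then obtain h0 where h0: "h0 \<in> C" "\<And>h. h \<in> C \<Longrightarrow> Q h0 \<le> Q h"
    using continuous_attains_inf[OF C(1) False] by blast
  obtain f0 where f0: "f0 \<in> G" "h0 f0 \<noteq> p f0" using dif h0(1) by blast
  have Qpos: "Q h0 > 0"
  proof -
    have "(h0 f0 - p f0)^2 > 0" using f0 by simp
    also have "(h0 f0 - p f0)^2 \<le> Q h0" unfolding Q_def
      by (rule member_le_sum[OF f0(1) _ G]) auto
    finally show ?thesis .
  qed
  define c where "c f = p f - h0 f" for f
  have key: "(\<Sum>f\<in>G. c f * (h f - h0 f)) \<le> 0" if h: "h \<in> C" for h
  proof (rule ccontr)
    define D where "D = (\<Sum>f\<in>G. c f * (h f - h0 f))"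
    define M where "M = (\<Sum>f\<in>G. (h f - h0 f)^2)"
    assume "\<not> (\<Sum>f\<in>G. c f * (h f - h0 f)) \<le> 0"
    then have Dpos: "D > 0" unfolding D_def by simp
    have Mnn: "M \<ge> 0" unfolding M_def by (intro sum_nonneg) auto
    define t where "t = min 1 (D / (M + 1))"
    have t: "0 < t" "t \<le> 1" using Dpos Mnn unfolding t_def by auto
    have expand: "Q (cmb t h0 h) = Q h0 - 2 * t * D + t^2 * M"
    proof -
      have "Q (cmb t h0 h) = (\<Sum>f\<in>G. (h0 f - p f)^2 - 2 * t * (c f * (h f - h0 f)) + t^2 * (h f - h0 f)^2)"
        unfolding Q_def cmb_def c_def by (intro sum.cong) (auto simp: power2_eq_square algebra_simps)
      also have "\<dots> = Q h0 - 2 * t * D + t^2 * M"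
        unfolding Q_def D_def M_def by (simp add: sum.distrib sum_subtractf sum_distrib_left)
      finally show ?thesis .
    qed
    have "Q h0 \<le> Q (cmb t h0 h)" using h0(2) cmb_in_fconvex[OF C(2) h0(1) h] t by auto
    then have "2 * t * D \<le> t^2 * M" using expand by simp
    then have "2 * D \<le> t * M" using t by (simp add: power2_eq_square mult.assoc)
    moreover have "t * M \<le> D"
    proof -
      have "t * M \<le> (D / (M + 1)) * M" using Mnn unfolding t_def by (intro mult_right_mono) auto
      also have "\<dots> \<le> D" using Mnn Dpos by (simp add: field_simps)
      finally show ?thesis .
    qed
    ultimately show False using Dpos by simp
  qed
  show ?thesis
  proof (intro exI[of _ c] exI[of _ "Q h0"] conjI Qpos ballI)
    fix h assume h: "h \<in> C"
    have "(\<Sum>f\<in>G. c f * p f) - (\<Sum>f\<in>G. c f * h f) = Q h0 - (\<Sum>f\<in>G. c f * (h f - h0 f))"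
    proof -
      have "(\<Sum>f\<in>G. c f * p f) - (\<Sum>f\<in>G. c f * h f) = (\<Sum>f\<in>G. (h0 f - p f)^2 - c f * (h f - h0 f))"
        unfolding sum_subtractf[symmetric] c_def by (intro sum.cong) (auto simp: power2_eq_square algebra_simps)
      then show ?thesis unfolding Q_def by (simp add: sum_subtractf)
    qed
    then show "(\<Sum>f\<in>G. c f * h f) + Q h0 \<le> (\<Sum>f\<in>G. c f * p f)" using key[OF h] by simp
  qed
qed


lemma canon_apply[simp]: "blinfun_apply (canon_embed x) f = blinfun_apply f x"
  unfolding canon_embed_def
  by (subst bounded_linear_Blinfun_apply) (auto intro: blinfun.bounded_linear_left)

lemma lin_bd_blinfun:
  assumes "lin_bd a"
  shows "bounded_linear a" "norm (Blinfun a) \<le> 1" "blinfun_apply (Blinfun a) = a"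
proof -
  show bl: "bounded_linear a"
    using assms unfolding lin_bd_def by (intro bounded_linear_intro[where K=1]) auto
  show ap: "blinfun_apply (Blinfun a) = a" using bounded_linear_Blinfun_apply[OF bl] .
  show "norm (Blinfun a) \<le> 1"
    using assms unfolding lin_bd_def by (intro norm_blinfun_bound) (auto simp: ap)
qed

lemma pext_canon:
  assumes "preserved_extreme_point (x::'a::banach)"
  shows "pext (\<lambda>f. blinfun_apply f x)"
  unfolding pext_def
proof (intro allI impI, elim conjE)
  fix a b and t :: real
  assume a: "lin_bd a" and b: "lin_bd b" and t: "0 < t" "t < 1" and e: "cmb t a b = (\<lambda>f. blinfun_apply f x)"
  show "a = (\<lambda>f. blinfun_apply f x)"
  proof (rule ccontr)
    assume ne: "a \<noteq> (\<lambda>f. blinfun_apply f x)"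
    define A where "A = Blinfun a"
    define B where "B = Blinfun b"
    have AB: "norm A \<le> 1" "norm B \<le> 1" using lin_bd_blinfun a b unfolding A_def B_def by auto
    have ceq: "canon_embed x = (1 - t) *\<^sub>R A + t *\<^sub>R B"
    proof (rule blinfun_eqI)
      fix f
      have "blinfun_apply f x = (1 - t) * a f + t * b f" using fun_cong[OF e, of f] by (simp add: cmb_def)
      then show "blinfun_apply (canon_embed x) f = blinfun_apply ((1 - t) *\<^sub>R A + t *\<^sub>R B) f"
        unfolding A_def B_def using lin_bd_blinfun(3)[OF a] lin_bd_blinfun(3)[OF b] by (simp add: plus_blinfun.rep_eq scaleR_blinfun.rep_eq)
    qed
    have "A \<noteq> B"
    proof
      assume "A = B"
      then have "a = b" unfolding A_def B_def using lin_bd_blinfun(3)[OF a] lin_bd_blinfun(3)[OF b] by metis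
      then have "cmb t a b = a" by (auto simp: cmb_def algebra_simps)
      then show False using e ne by simp
    qed
    then have "canon_embed x \<in> open_segment A B" using ceq t by (auto simp: in_segment)
    moreover have "A \<in> cball 0 1" "B \<in> cball 0 1" using AB by auto
    ultimately show False using assms unfolding preserved_extreme_point_def extreme_point_of_def by blast
  qed
qed

lemma gen_nbhd:
  assumes "generate_topology_on {{y. blinfun_apply f y \<in> U} | f U. open (U::real set)} W"
  shows "\<forall>x\<in>W. \<exists>(F::('a \<Rightarrow>\<^sub>L real) set) \<epsilon>. finite F \<and> \<epsilon> > 0 \<and> {y::'a::banach. \<forall>f\<in>F. \<bar>blinfun_apply f y - blinfun_apply f x\<bar> < \<epsilon>} \<subseteq> W"
  using assms
proof induction
  case Empty then show ?case by simp
next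
  case (Int a b)
  show ?case
  proof
    fix x assume "x \<in> a \<inter> b"
    then have xa: "x \<in> a" and xb: "x \<in> b" by auto
    obtain F1 and e1::real where 1: "finite F1" "e1 > 0" "{y. \<forall>f\<in>F1. \<bar>blinfun_apply f y - blinfun_apply f x\<bar> < e1} \<subseteq> a"
      using Int.IH(1) xa by blast
    obtain F2 and e2::real where 2: "finite F2" "e2 > 0" "{y. \<forall>f\<in>F2. \<bar>blinfun_apply f y - blinfun_apply f x\<bar> < e2} \<subseteq> b"
      using Int.IH(2) xb by blast
    show "\<exists>F \<epsilon>. finite F \<and> \<epsilon> > (0::real) \<and> {y. \<forall>f\<in>F. \<bar>blinfun_apply f y - blinfun_apply f x\<bar> < \<epsilon>} \<subseteq> a \<inter> b"
    proof (intro exI[of _ "F1 \<union> F2"] exI[of _ "min e1 e2"] conjI)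
      show "finite (F1 \<union> F2)" "min e1 e2 > 0" using 1 2 by auto
      show "{y. \<forall>f\<in>F1 \<union> F2. \<bar>blinfun_apply f y - blinfun_apply f x\<bar> < min e1 e2} \<subseteq> a \<inter> b"
      proof
        fix y assume "y \<in> {y. \<forall>f\<in>F1 \<union> F2. \<bar>blinfun_apply f y - blinfun_apply f x\<bar> < min e1 e2}"
        then have "y \<in> {y. \<forall>f\<in>F1. \<bar>blinfun_apply f y - blinfun_apply f x\<bar> < e1}"
          "y \<in> {y. \<forall>f\<in>F2. \<bar>blinfun_apply f y - blinfun_apply f x\<bar> < e2}" by auto
        then show "y \<in> a \<inter> b" using 1(3) 2(3) by blast
      qed
    qed
  qed
next
  case (UN K)
  show ?case
  proof
    fix x assume "x \<in> \<Union>K"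
    then obtain k where k: "k \<in> K" "x \<in> k" by blast
    then obtain F and e::real where Fe: "finite F" "e > 0" "{y. \<forall>f\<in>F. \<bar>blinfun_apply f y - blinfun_apply f x\<bar> < e} \<subseteq> k"
      using UN.IH[OF k(1)] by blast
    have "k \<subseteq> \<Union>K" using k(1) by blast
    then show "\<exists>F \<epsilon>. finite F \<and> \<epsilon> > (0::real) \<and> {y. \<forall>f\<in>F. \<bar>blinfun_apply f y - blinfun_apply f x\<bar> < \<epsilon>} \<subseteq> \<Union>K"
      using Fe by blast
  qed
next
  case (Basis s)
  then obtain f and U :: "real set" where s: "s = {y. blinfun_apply f y \<in> U}" "open U" by blast
  show ?case
  proof
    fix x assume "x \<in> s"
    then have "blinfun_apply f x \<in> U" using s by simp
    then obtain e where e: "e > 0" "ball (blinfun_apply f x) e \<subseteq> U" using s(2) open_contains_ball by blast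
    show "\<exists>F \<epsilon>. finite F \<and> \<epsilon> > (0::real) \<and> {y. \<forall>f\<in>F. \<bar>blinfun_apply f y - blinfun_apply f x\<bar> < \<epsilon>} \<subseteq> s"
    proof (intro exI[of _ "{f}"] exI[of _ e] conjI)
      show "{y. \<forall>g\<in>{f}. \<bar>blinfun_apply g y - blinfun_apply g x\<bar> < e} \<subseteq> s"
      proof
        fix y assume "y \<in> {y. \<forall>g\<in>{f}. \<bar>blinfun_apply g y - blinfun_apply g x\<bar> < e}"
        then have "\<bar>blinfun_apply f y - blinfun_apply f x\<bar> < e" by simp
        then have "blinfun_apply f y \<in> ball (blinfun_apply f x) e" by (simp add: dist_real_def abs_minus_commute)
        then show "y \<in> s" using e(2) s(1) by blast
      qed
    qed (use e in auto)
  qed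
qed

lemma J_lin_bd:
  assumes "norm (y::'a::banach) \<le> 1"
  shows "lin_bd (\<lambda>f. blinfun_apply f y)"
  unfolding lin_bd_def
proof (intro conjI allI)
  fix f :: "'a \<Rightarrow>\<^sub>L real"
  have "\<bar>blinfun_apply f y\<bar> \<le> norm f * norm y" using norm_blinfun[of f y] by simp
  also have "\<dots> \<le> norm f" using assms mult_left_mono[of "norm y" 1 "norm f"] by simp
  finally show "\<bar>blinfun_apply f y\<bar> \<le> norm f" .
qed (auto simp: blinfun.add_left blinfun.scaleR_left)

lemma slice_in_nbhd:
  fixes x :: "'a::banach"
  assumes pe: "preserved_extreme_point x" and nx: "norm x = 1" and F: "finite (F::('a \<Rightarrow>\<^sub>L real) set)"
    and e: "(\<epsilon>::real) > 0"
  shows "\<exists>g \<delta>. \<delta> > 0 \<and> x \<in> slice_of g \<delta> \<and>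
           slice_of g \<delta> \<subseteq> {y\<in>cball 0 1. \<forall>f\<in>F. \<bar>blinfun_apply f y - blinfun_apply f x\<bar> < \<epsilon>}"
proof -
  define p where "p = (\<lambda>f::'a \<Rightarrow>\<^sub>L real. blinfun_apply f x)"
  have pe': "pext p" unfolding p_def by (rule pext_canon[OF pe])
  have finP: "finite (F \<times> {1::real, -1})" using F by simp
  obtain C where C: "compact C" "fconvex C" "C \<subseteq> {h. lin_bd h}" "p \<notin> C"
      "\<forall>(f, s)\<in>F \<times> {1::real, -1}. Kp p \<epsilon> f s \<subseteq> C"
    using pieces_hull[OF finP e pe'] by blast
  obtain G where G: "finite G" "\<forall>h\<in>C. \<exists>f\<in>G. h f \<noteq> p f"
    using finite_cover[OF C(1,4)] by blast
  obtain c and \<eta> :: real where ce: "\<eta> > 0" "\<forall>h\<in>C. (\<Sum>f\<in>G. c f * h f) + \<eta> \<le> (\<Sum>f\<in>G. c f * p f)"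
    using sep_lemma[OF G(1) C(1,2) G(2)] by blast
  define g where "g = (\<Sum>f\<in>G. c f *\<^sub>R f)"
  have gapp: "blinfun_apply g y = (\<Sum>f\<in>G. c f * blinfun_apply f y)" for y
    unfolding g_def by (simp add: blinfun.sum_left blinfun.scaleR_left)
  have bad: "blinfun_apply g y + \<eta> \<le> blinfun_apply g x"
    if y: "y \<in> cball 0 1" and f: "f \<in> F" and fy: "\<epsilon> \<le> \<bar>blinfun_apply f y - blinfun_apply f x\<bar>" for y f
  proof -
    define s :: real where "s = (if blinfun_apply f y - blinfun_apply f x \<ge> 0 then 1 else -1)"
    have "\<epsilon> \<le> s * ((\<lambda>f. blinfun_apply f y) f - p f)" using fy unfolding s_def p_def by auto
    moreover have "lin_bd (\<lambda>f. blinfun_apply f y)" using y by (intro J_lin_bd) auto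
    ultimately have "(\<lambda>f. blinfun_apply f y) \<in> Kp p \<epsilon> f s" by (simp add: Kp_def)
    moreover have "(f, s) \<in> F \<times> {1, -1}" using f by (simp add: s_def)
    ultimately have "(\<lambda>f. blinfun_apply f y) \<in> C" using C(5) by blast
    then show ?thesis using ce(2) unfolding gapp p_def by auto
  qed
  have gx: "blinfun_apply g x \<le> norm g"
    using norm_blinfun[of g x] nx by simp
  define \<delta> where "\<delta> = norm g - blinfun_apply g x + \<eta> / 2"
  show ?thesis
  proof (intro exI[of _ g] exI[of _ \<delta>] conjI)
    show "\<delta> > 0" using gx ce(1) unfolding \<delta>_def by simp
    show "x \<in> slice_of g \<delta>" using nx ce(1) unfolding slice_of_def \<delta>_def by simp
    show "slice_of g \<delta> \<subseteq> {y\<in>cball 0 1. \<forall>f\<in>F. \<bar>blinfun_apply f y - blinfun_apply f x\<bar> < \<epsilon>}"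
    proof
      fix y assume y: "y \<in> slice_of g \<delta>"
      then have yb: "y \<in> cball 0 1" and gy: "blinfun_apply g y > blinfun_apply g x - \<eta> / 2"
        unfolding slice_of_def \<delta>_def by auto
      have "\<forall>f\<in>F. \<bar>blinfun_apply f y - blinfun_apply f x\<bar> < \<epsilon>"
      proof (intro ballI)
        fix f assume "f \<in> F"
        show "\<bar>blinfun_apply f y - blinfun_apply f x\<bar> < \<epsilon>"
        proof (rule ccontr)
          assume "\<not> \<bar>blinfun_apply f y - blinfun_apply f x\<bar> < \<epsilon>"
          then have "blinfun_apply g y + \<eta> \<le> blinfun_apply g x" using bad[OF yb \<open>f \<in> F\<close>] by simp
          then show False using gy ce(1) by simp
        qed
      qed
      then show "y \<in> {y\<in>cball 0 1. \<forall>f\<in>F. \<bar>blinfun_apply f y - blinfun_apply f x\<bar> < \<epsilon>}" using yb by simp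
    qed
  qed
qed

lemma sup_two:
  fixes x :: "'a::real_normed_vector"
  assumes "S \<subseteq> V" "V \<subseteq> cball 0 1" "x \<in> S" "norm x = 1" "(SUP y\<in>S. norm (x - y)) = 2"
  shows "(SUP y\<in>V. norm (x - y)) = 2"
proof -
  have bnd: "norm (x - y) \<le> 2" if "y \<in> V" for y
  proof -
    have "norm (x - y) \<le> norm x + norm y" by (rule norm_triangle_ineq4)
    also have "\<dots> \<le> 2" using assms(2,4) that by auto
    finally show ?thesis .
  qed
  have ne: "S \<noteq> {}" "V \<noteq> {}" using assms by auto
  have bdd: "bdd_above ((\<lambda>y. norm (x - y)) ` V)" using bnd by (intro bdd_aboveI[where M=2]) auto
  have "(SUP y\<in>V. norm (x - y)) \<le> 2" using bnd ne(2) by (intro cSUP_least) auto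
  moreover have "(SUP y\<in>S. norm (x - y)) \<le> (SUP y\<in>V. norm (x - y))"
    by (rule cSUP_subset_mono[OF ne(1) bdd assms(1)]) auto
  ultimately show ?thesis using assms(5) by linarith
qed

lemma slice_open: "rel_weakly_open_in_ball (slice_of (f::'a::banach \<Rightarrow>\<^sub>L real) \<delta>)"
proof -
  have T: "openin weak_topology {y::'a. blinfun_apply f y \<in> {norm f - \<delta><..}}"
    unfolding weak_topology_def openin_topology_generated_by_iff
    by (rule generate_topology_on.Basis) (use open_greaterThan[of "norm f - \<delta>"] in blast)
  have "slice_of f \<delta> = {y. blinfun_apply f y \<in> {norm f - \<delta><..}} \<inter> cball 0 1"
    by (auto simp: slice_of_def)
  then show ?thesis unfolding rel_weakly_open_in_ball_def openin_subtopology using T by blast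
qed

lemma part1:
  fixes x :: "'a::banach"
  assumes nx: "norm x = 1" and pe: "preserved_extreme_point x" and dp: "delta_point x"
  shows "super_delta_point x"
  unfolding super_delta_point_def
proof (intro conjI allI impI nx, elim conjE)
  fix V assume V: "rel_weakly_open_in_ball V" and xV: "x \<in> V"
  obtain T where T: "openin weak_topology T" "V = T \<inter> cball 0 1"
    using V unfolding rel_weakly_open_in_ball_def openin_subtopology by blast
  have gT: "generate_topology_on {{y. blinfun_apply f y \<in> U} | f U. open (U::real set)} T"
    using T(1) unfolding weak_topology_def openin_topology_generated_by_iff .
  have "x \<in> T" using xV T(2) by blast
  then obtain F and \<epsilon> :: real where Fe: "finite F" "\<epsilon> > 0"
    "{y. \<forall>f\<in>F. \<bar>blinfun_apply f y - blinfun_apply f x\<bar> < \<epsilon>} \<subseteq> T"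
    using gen_nbhd[OF gT] by blast
  obtain g \<delta> where gd: "\<delta> > 0" "x \<in> slice_of g \<delta>"
      "slice_of g \<delta> \<subseteq> {y\<in>cball 0 1. \<forall>f\<in>F. \<bar>blinfun_apply f y - blinfun_apply f x\<bar> < \<epsilon>}"
    using slice_in_nbhd[OF pe nx Fe(1,2)] by blast
  have sl: "is_slice (slice_of g \<delta>)" unfolding is_slice_def using gd by blast
  have S2: "(SUP y\<in>slice_of g \<delta>. norm (x - y)) = 2" using dp sl gd(2) unfolding delta_point_def by blast
  have sub: "slice_of g \<delta> \<subseteq> V" using gd(3) Fe(3) T(2) by blast
  have "V \<subseteq> cball 0 1" using T(2) by blast
  then show "(SUP y\<in>V. norm (x - y)) = 2" using sup_two[OF sub _ gd(2) nx S2] by blast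
qed

lemma extreme_comb:
  fixes x :: "'b::real_normed_vector" and n :: nat
  assumes ex: "x extreme_point_of cball 0 1" and h: "\<forall>i<n. 0 < lam i \<and> y i \<in> cball 0 1"
    and s1: "(\<Sum>i<n. lam i) = 1" and xe: "x = (\<Sum>i<n. lam i *\<^sub>R y i)"
  shows "\<forall>i<n. y i = x"
proof (rule ccontr)
  assume "\<not> (\<forall>i<n. y i = x)"
  define I where "I = {i\<in>{..<n}. y i \<noteq> x}"
  have I: "I \<noteq> {}" "I \<subseteq> {..<n}" using \<open>\<not> (\<forall>i<n. y i = x)\<close> unfolding I_def by auto
  have I3: "finite I" by (rule finite_subset[OF I(2)]) simp
  define L where "L = (\<Sum>i\<in>I. lam i)"
  have Lpos: "L > 0" unfolding L_def using I I3 h by (intro sum_pos) auto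
  have cv: "convex (cball 0 1 - {x})" using ex extreme_point_of_stillconvex[of "cball (0::'b) 1" x] by simp
  have "(\<Sum>i<n. lam i *\<^sub>R y i) = (\<Sum>i\<in>{..<n} - I. lam i *\<^sub>R y i) + (\<Sum>i\<in>I. lam i *\<^sub>R y i)"
    using sum.subset_diff[OF I(2)] by simp
  also have "(\<Sum>i\<in>{..<n} - I. lam i *\<^sub>R y i) = (\<Sum>i\<in>{..<n} - I. lam i *\<^sub>R x)"
    by (intro sum.cong) (auto simp: I_def)
  also have "\<dots> = (\<Sum>i\<in>{..<n} - I. lam i) *\<^sub>R x" by (simp add: scaleR_sum_left)
  also have "(\<Sum>i\<in>{..<n} - I. lam i) = 1 - L"
    using sum.subset_diff[OF I(2), of lam] s1 unfolding L_def by simp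
  finally have "x = (1 - L) *\<^sub>R x + (\<Sum>i\<in>I. lam i *\<^sub>R y i)" using xe by simp
  then have "L *\<^sub>R x = (\<Sum>i\<in>I. lam i *\<^sub>R y i)" by (simp add: algebra_simps)
  then have "inverse L *\<^sub>R (L *\<^sub>R x) = inverse L *\<^sub>R (\<Sum>i\<in>I. lam i *\<^sub>R y i)" by simp
  also have "inverse L *\<^sub>R (\<Sum>i\<in>I. lam i *\<^sub>R y i) = (\<Sum>i\<in>I. (lam i / L) *\<^sub>R y i)"
    by (simp add: scaleR_sum_right divide_inverse_commute)
  finally have xeq: "x = (\<Sum>i\<in>I. (lam i / L) *\<^sub>R y i)" using Lpos by simp
  have "(\<Sum>i\<in>I. (lam i / L) *\<^sub>R y i) \<in> cball 0 1 - {x}"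
  proof (rule convex_sum[OF I3 cv])
    show "(\<Sum>i\<in>I. lam i / L) = 1" using Lpos unfolding L_def by (simp add: sum_divide_distrib[symmetric])
    fix i assume "i \<in> I"
    then have i: "i < n" "y i \<noteq> x" unfolding I_def by auto
    then have "0 < lam i" "y i \<in> cball 0 1" using h by auto
    then show "0 \<le> lam i / L" "y i \<in> cball 0 1 - {x}" using Lpos i by auto
  qed
  then show False using xeq by simp
qed

lemma slice_sub_ball: "slice_of f \<delta> \<subseteq> cball 0 1"
  by (auto simp: slice_of_def)

lemma ccs_from_super:
  fixes x :: "'a::banach"
  assumes sd: "super_delta_point x" and nx: "norm x = 1"
    and H: "\<And>n lam S y. n \<ge> 1 \<Longrightarrow> (\<forall>i<n. 0 < lam i \<and> lam i \<le> 1 \<and> is_slice (S i)) \<Longrightarrow>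
        (\<Sum>i<(n::nat). lam i) = 1 \<Longrightarrow> (\<forall>i<n. y i \<in> S i) \<Longrightarrow> x = (\<Sum>i<n. lam i *\<^sub>R y i) \<Longrightarrow> (\<forall>i<n. x \<in> S i)"
  shows "ccs_delta_point x"
  unfolding ccs_delta_point_def
proof (intro conjI allI impI nx, elim conjE)
  fix C assume cc: "is_ccs C" and xC: "x \<in> C"
  obtain n :: nat and lam S where nls: "n \<ge> 1" "\<forall>i<n. 0 < lam i \<and> lam i \<le> 1 \<and> is_slice (S i)"
      "(\<Sum>i<n. lam i) = 1" "C = {(\<Sum>i<n. lam i *\<^sub>R y i) | y. \<forall>i<n. y i \<in> S i}"
    using cc unfolding is_ccs_def by blast
  obtain y where y: "\<forall>i<n. y i \<in> S i" "x = (\<Sum>i<n. lam i *\<^sub>R y i)" using xC nls(4) by blast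
  have xS: "\<forall>i<n. x \<in> S i" using H[OF nls(1,2,3) y] .
  have Sball: "S i \<subseteq> cball 0 1" if i: "i < n" for i
  proof -
    obtain f \<delta> where "S i = slice_of f \<delta>" using nls(2) i unfolding is_slice_def by blast
    then show ?thesis using slice_sub_ball by simp
  qed
  have Sopen: "rel_weakly_open_in_ball (S i)" if i: "i < n" for i
  proof -
    obtain f \<delta> where "S i = slice_of f \<delta>" using nls(2) i unfolding is_slice_def by blast
    then show ?thesis using slice_open by simp
  qed
  define V where "V = \<Inter> (S ` {..<n})"
  have Vopen: "rel_weakly_open_in_ball V"
    unfolding V_def rel_weakly_open_in_ball_def
  proof (rule openin_Inter)
    show "finite (S ` {..<n})" by simp
    have "0 \<in> {..<n}" using nls(1) by simp
    then show "S ` {..<n} \<noteq> {}" by blast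
    show "\<And>T. T \<in> S ` {..<n} \<Longrightarrow> openin (subtopology weak_topology (cball 0 1)) T"
      using Sopen unfolding rel_weakly_open_in_ball_def by auto
  qed
  have xV: "x \<in> V" using xS unfolding V_def by auto
  have V2: "(SUP z\<in>V. norm (x - z)) = 2" using sd Vopen xV unfolding super_delta_point_def by blast
  have VC: "V \<subseteq> C"
  proof
    fix z assume "z \<in> V"
    then have zS: "\<forall>i<n. z \<in> S i" unfolding V_def by auto
    have zeq: "z = (\<Sum>i<n. lam i *\<^sub>R z)" using nls(3) by (simp add: scaleR_sum_left[symmetric])
    show "z \<in> C" unfolding nls(4) using zS zeq by (intro CollectI exI[of _ "\<lambda>_. z"] conjI) auto
  qed
  have Cball: "C \<subseteq> cball 0 1"
  proof
    fix w assume "w \<in> C"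
    then obtain u where u: "\<forall>i<n. u i \<in> S i" "w = (\<Sum>i<n. lam i *\<^sub>R u i)" using nls(4) by blast
    have "(\<Sum>i\<in>{..<n}. lam i *\<^sub>R u i) \<in> cball 0 1"
    proof (rule convex_sum)
      show "finite {..<n}" "convex (cball (0::'a) 1)" "(\<Sum>i\<in>{..<n}. lam i) = 1" using nls(3) by auto
      fix i assume "i \<in> {..<n}"
      then have "i < n" by simp
      then show "0 \<le> lam i" using nls(2) by (auto intro: less_imp_le)
      have "u i \<in> S i" using u(1) \<open>i < n\<close> by auto
      then show "u i \<in> cball 0 1" using Sball[OF \<open>i < n\<close>] by blast
    qed
    then show "w \<in> cball 0 1" using u(2) by simp
  qed
  show "(SUP z\<in>C. norm (x - z)) = 2" by (rule sup_two[OF VC Cball xV nx V2])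
qed

lemma canon_lin:
  "canon_embed (\<Sum>i<n. lam i *\<^sub>R y i) = (\<Sum>i<(n::nat). lam i *\<^sub>R canon_embed (y i :: 'a::banach))"
  by (rule blinfun_eqI) (simp add: blinfun.sum_left blinfun.scaleR_left blinfun.sum_right blinfun.scaleR_right)

lemma canon_norm: "norm (canon_embed (y::'a::banach)) \<le> norm y"
proof (rule norm_blinfun_bound)
  show "0 \<le> norm y" by simp
  fix f :: "'a \<Rightarrow>\<^sub>L real"
  show "norm (blinfun_apply (canon_embed y) f) \<le> norm y * norm f"
    using norm_blinfun[of f y] by (simp add: mult.commute)
qed

theorem part2:
  fixes x :: "'a::banach"
  assumes nx: "norm x = 1" and ex: "x extreme_point_of cball 0 1" and sd: "super_delta_point x"
  shows "ccs_delta_point x"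
proof (rule ccs_from_super[OF sd nx])
  fix n :: nat and lam S y
  assume h: "n \<ge> 1" "\<forall>i<n. 0 < lam i \<and> lam i \<le> 1 \<and> is_slice (S i)" "(\<Sum>i<n. lam i) = 1"
    "\<forall>i<n. y i \<in> S i" "x = (\<Sum>i<n. lam i *\<^sub>R y i)"
  have yb: "\<forall>i<n. 0 < lam i \<and> y i \<in> cball 0 1"
  proof (intro allI impI conjI)
    fix i assume i: "i < n"
    show "0 < lam i" using h(2) i by auto
    obtain f \<delta> where "S i = slice_of f \<delta>" using h(2) i unfolding is_slice_def by blast
    moreover have "y i \<in> S i" using h(4) i by auto
    ultimately show "y i \<in> cball 0 1" using slice_sub_ball by blast
  qed
  have "\<forall>i<n. y i = x" by (rule extreme_comb[OF ex yb h(3,5)])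
  then show "\<forall>i<n. x \<in> S i" using h(4) by auto
qed

theorem part3:
  fixes x :: "'a::banach"
  assumes nx: "norm x = 1" and pe: "preserved_extreme_point x" and sd: "super_delta_point x"
  shows "ccs_delta_point x"
proof (rule ccs_from_super[OF sd nx])
  fix n :: nat and lam S y
  assume h: "n \<ge> 1" "\<forall>i<n. 0 < lam i \<and> lam i \<le> 1 \<and> is_slice (S i)" "(\<Sum>i<n. lam i) = 1"
    "\<forall>i<n. y i \<in> S i" "x = (\<Sum>i<n. lam i *\<^sub>R y i)"
  have ex: "canon_embed x extreme_point_of cball 0 1" using pe unfolding preserved_extreme_point_def by blast
  have yb: "\<forall>i<n. 0 < lam i \<and> canon_embed (y i) \<in> cball 0 1"
  proof (intro allI impI conjI)
    fix i assume i: "i < n"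
    show "0 < lam i" using h(2) i by auto
    obtain f \<delta> where "S i = slice_of f \<delta>" using h(2) i unfolding is_slice_def by blast
    moreover have "y i \<in> S i" using h(4) i by auto
    ultimately have "y i \<in> cball 0 1" using slice_sub_ball by blast
    then have "norm (y i) \<le> 1" by simp
    then show "canon_embed (y i) \<in> cball 0 1" using canon_norm[of "y i"] by simp
  qed
  have xe: "canon_embed x = (\<Sum>i<n. lam i *\<^sub>R canon_embed (y i))" using h(5) canon_lin by metis
  have eq: "\<forall>i<n. canon_embed (y i) = canon_embed x" by (rule extreme_comb[OF ex yb h(3) xe])
  show "\<forall>i<n. x \<in> S i"
  proof (intro allI impI)
    fix i assume i: "i < n"
    obtain f \<delta> where Si: "S i = slice_of f \<delta>" using h(2) i unfolding is_slice_def by blast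
    have "blinfun_apply f (y i) = blinfun_apply f x"
      using arg_cong[OF eq[rule_format, OF i], of "\<lambda>J. blinfun_apply J f"] by simp
    then show "x \<in> S i" using h(4) i Si nx unfolding slice_of_def by auto
  qed
qed

theorem mainTheorem3:
  fixes x :: "'a::banach"
  assumes "norm x = 1"
  shows "(preserved_extreme_point x \<and> delta_point x \<longrightarrow> super_delta_point x)
       \<and> (x extreme_point_of cball 0 1 \<and> super_delta_point x \<longrightarrow> ccs_delta_point x)
       \<and> (preserved_extreme_point x \<and> delta_point x \<longrightarrow> super_delta_point x \<and> ccs_delta_point x)"
  using part1[OF assms] part2[OF assms] part3[OF assms] by blast

end
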